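(* Let $y$ be a non-empty word of length $n$ over a totally ordered alphabet. Algorithm LyndonSuffixTable (described in the context) terminates and returns the Lyndon suffix table of $y$, i.e. for every $j\in\{0,\dots,n-1\}$ its output satisfies $\mathrm{lyns}[j]=$ the length of the longest suffix of $y[0\,..\,j]$ that is a Lyndon word. It runs in time $O(n)$ and accesses letters of $y$ only through letter comparisons.
   Context: Lexicographic order $<$: $u<v$ if $u$ is a proper prefix of $v$, or $u=ras$, $v=rbt$ with letters $a<b$. A Lyndon word is a non-empty word strictly smaller than each of its proper non-empty suffixes. $y[i\,..\,j]$ denotes $y[i]\cdots y[j]$. Algorithm LyndonSuffixTable (input: non-empty word $y$ of length $n$): lyns[0] ← 1; per ← 1; h ← 0; i ← 0; j ← 1. While j < n: if y[j] < y[i] then { h ← j − (i − h); lyns[h] ← 1; per ← 1; i ← h; j ← h+1 } else if y[j] > y[i] then { lyns[j] ← j − h + 1; j ← j+1; per ← j − h; i ← h } else { lyns[j] ← lyns[i]; i ← h + ((i − h + 1) mod per); j ← j+1 }. Return lyns. *)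

theory Defs
  imports Main
begin

definition lex_less :: "'a::linorder list \<Rightarrow> 'a list \<Rightarrow> bool" where
  "lex_less u v \<longleftrightarrow>
     (\<exists>w. w \<noteq> [] \<and> v = u @ w) \<or>
     (\<exists>r a b s t. u = r @ a # s \<and> v = r @ b # t \<and> a < b)"

definition lyndon :: "'a::linorder list \<Rightarrow> bool" where
  "lyndon w \<longleftrightarrow> w \<noteq> [] \<and> (\<forall>k. 0 < k \<and> k < length w \<longrightarrow> lex_less w (drop k w))"

definition longest_lyndon_suffix_len :: "'a::linorder list \<Rightarrow> nat" where
  "longest_lyndon_suffix_len x =
     (GREATEST l. l \<le> length x \<and> lyndon (drop (length x - l) x))"

text \<open>The algorithm is parameterised by a
  comparison oracle on positions, lt a b meaning y[a] < y[b]; this makes explicit that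
  the letters of y are accessed only through letter comparisons.\<close>
type_synonym lst_state = "(nat \<Rightarrow> nat) \<times> nat \<times> nat \<times> nat \<times> nat"

definition lst_init :: lst_state where
  "lst_init = ((\<lambda>_. 0)(0 := 1), 1, 0, 0, 1)"

definition lst_j :: "lst_state \<Rightarrow> nat" where
  "lst_j s = (case s of (lyns, per, h, i, j) \<Rightarrow> j)"

definition lst_lyns :: "lst_state \<Rightarrow> nat \<Rightarrow> nat" where
  "lst_lyns s = (case s of (lyns, per, h, i, j) \<Rightarrow> lyns)"

definition lst_step :: "(nat \<Rightarrow> nat \<Rightarrow> bool) \<Rightarrow> lst_state \<Rightarrow> lst_state" where
  "lst_step lt s = (case s of (lyns, per, h, i, j) \<Rightarrow>
     if lt j i then
       (let h' = j - (i - h) in (lyns(h' := 1), 1, h', h', h' + 1))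
     else if lt i j then
       (lyns(j := j - h + 1), (j + 1) - h, h, h, j + 1)
     else
       (lyns(j := lyns i), per, h, h + ((i - h + 1) mod per), j + 1))"

definition word_lt :: "'a::linorder list \<Rightarrow> nat \<Rightarrow> nat \<Rightarrow> bool" where
  "word_lt y a b \<longleftrightarrow> y ! a < y ! b"

definition lst_iter :: "'a::linorder list \<Rightarrow> nat \<Rightarrow> lst_state" where
  "lst_iter y k = ((lst_step (word_lt y)) ^^ k) lst_init"

definition lst_steps :: "'a::linorder list \<Rightarrow> nat" where
  "lst_steps y = (LEAST k. \<not> lst_j (lst_iter y k) < length y)"

definition lyndon_suffix_table :: "'a::linorder list \<Rightarrow> nat \<Rightarrow> nat" where
  "lyndon_suffix_table y = lst_lyns (lst_iter y (lst_steps y))"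

end

theory Submission
  imports Defs
begin


lemma lex_less_iff:
  "lex_less u v \<longleftrightarrow> (length u < length v \<and> (\<forall>i<length u. u!i = v!i)) \<or>
     (\<exists>l. l < length u \<and> l < length v \<and> (\<forall>i<l. u!i = v!i) \<and> u!l < v!l)"
proof
  assume "lex_less u v"
  then consider (a) w where "w \<noteq> []" "v = u @ w" | (b) r a b s t where "u = r @ a # s" "v = r @ b # t" "a < b"
    unfolding lex_less_def by blast
  then show "(length u < length v \<and> (\<forall>i<length u. u!i = v!i)) \<or>
     (\<exists>l. l < length u \<and> l < length v \<and> (\<forall>i<l. u!i = v!i) \<and> u!l < v!l)"
  proof cases
    case a then show ?thesis by (auto simp: nth_append)
  next
    case b
    then have "length r < length u \<and> length r < length v \<and> (\<forall>i<length r. u!i = v!i) \<and> u!length r < v!length r"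
      by (auto simp: nth_append)
    then show ?thesis by blast
  qed
next
  assume "(length u < length v \<and> (\<forall>i<length u. u!i = v!i)) \<or>
     (\<exists>l. l < length u \<and> l < length v \<and> (\<forall>i<l. u!i = v!i) \<and> u!l < v!l)"
  then show "lex_less u v"
  proof
    assume h: "length u < length v \<and> (\<forall>i<length u. u!i = v!i)"
    have t: "take (length u) v = u" using h by (intro nth_equalityI) auto
    have "v = u @ drop (length u) v" using t append_take_drop_id by metis
    moreover have "drop (length u) v \<noteq> []" using h by simp
    ultimately show ?thesis unfolding lex_less_def by blast
  next
    assume "\<exists>l. l < length u \<and> l < length v \<and> (\<forall>i<l. u!i = v!i) \<and> u!l < v!l"
    then obtain l where l: "l < length u" "l < length v" "\<forall>i<l. u!i = v!i" "u!l < v!l" by blast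
    have t: "take l u = take l v" using l by (intro nth_equalityI) auto
    have u: "u = take l u @ u!l # drop (Suc l) u" using l(1) by (rule id_take_nth_drop)
    have v0: "v = take l v @ v!l # drop (Suc l) v" using l(2) by (rule id_take_nth_drop)
    have v: "v = take l u @ v!l # drop (Suc l) v" using v0 t by simp
    show ?thesis unfolding lex_less_def
      apply (rule disjI2)
      apply (rule exI[of _ "take l u"], rule exI[of _ "u!l"], rule exI[of _ "v!l"], rule exI[of _ "drop (Suc l) u"], rule exI[of _ "drop (Suc l) v"])
      by (rule conjI[OF u conjI[OF v l(4)]])
  qed
qed

lemma lyndon_iff:
  "lyndon x \<longleftrightarrow> x \<noteq> [] \<and> (\<forall>k. 0 < k \<and> k < length x \<longrightarrow>
     (\<exists>l. l < length x - k \<and> (\<forall>i<l. x!i = x!(k+i)) \<and> x!l < x!(k+l)))"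
proof -
  have "\<And>k. 0 < k \<Longrightarrow> k < length x \<Longrightarrow> lex_less x (drop k x) \<longleftrightarrow>
     (\<exists>l. l < length x - k \<and> (\<forall>i<l. x!i = x!(k+i)) \<and> x!l < x!(k+l))"
  proof -
    fix k assume k: "0 < k" "k < length x"
    have "lex_less x (drop k x) \<longleftrightarrow>
     (\<exists>l. l < length x \<and> l < length x - k \<and> (\<forall>i<l. x!i = x!(k+i)) \<and> x!l < x!(k+l))"
      proof -
        have "\<not> length x < length x - k" by arith
        then show ?thesis unfolding lex_less_iff using k by (auto simp: nth_drop)
      qed
    also have "\<dots> \<longleftrightarrow> (\<exists>l. l < length x - k \<and> (\<forall>i<l. x!i = x!(k+i)) \<and> x!l < x!(k+l))"
      by (meson diff_le_self order_less_le_trans)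
    finally show "?thesis k" .
  qed
  then show ?thesis unfolding lyndon_def by blast
qed

definition sg :: "'a list \<Rightarrow> nat \<Rightarrow> nat \<Rightarrow> 'a list" where
  "sg y a b = drop a (take b y)"

definition lynseg :: "'a::linorder list \<Rightarrow> nat \<Rightarrow> nat \<Rightarrow> bool" where
  "lynseg y a b \<longleftrightarrow> a < b \<and> (\<forall>k. a < k \<and> k < b \<longrightarrow>
     (\<exists>l<b-k. (\<forall>i<l. y!(a+i) = y!(k+i)) \<and> y!(a+l) < y!(k+l)))"

lemma lyndon_sg: assumes "b \<le> length y" shows "lyndon (sg y a b) \<longleftrightarrow> lynseg y a b"
proof -
  have len: "length (sg y a b) = b - a" using assms by (simp add: sg_def)
  have nth: "\<And>i. i < b - a \<Longrightarrow> sg y a b ! i = y ! (a+i)" using assms by (simp add: sg_def)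
  show ?thesis
    unfolding lyndon_iff lynseg_def len
  proof (intro iffI conjI allI impI)
    assume A: "sg y a b \<noteq> [] \<and> (\<forall>k. 0 < k \<and> k < b - a \<longrightarrow> (\<exists>l<b - a - k. (\<forall>i<l. sg y a b ! i = sg y a b ! (k + i)) \<and> sg y a b ! l < sg y a b ! (k + l)))"
    show "a < b" using A len by (metis length_greater_0_conv zero_less_diff)
    fix k assume k: "a < k \<and> k < b"
    have k': "0 < k - a \<and> k - a < b - a" using k by arith
    obtain l where l: "l < b - a - (k-a)" "\<forall>i<l. sg y a b ! i = sg y a b ! (k - a + i)" "sg y a b ! l < sg y a b ! (k -a + l)"
      using A k' by blast
    have lb: "l < b - k" using l(1) k by arith
    have e1: "\<And>i. i < l \<Longrightarrow> sg y a b ! i = y ! (a+i)" using lb k by (intro nth) arith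
    have e2: "\<And>i. i \<le> l \<Longrightarrow> sg y a b ! (k - a + i) = y ! (k+i)"
    proof -
      fix i assume "i \<le> l"
      then have "k - a + i < b - a" "a + (k - a + i) = k + i" using lb k by arith+
      then show "sg y a b ! (k - a + i) = y ! (k+i)" using nth by metis
    qed
    have e3: "sg y a b ! l = y ! (a+l)" using lb k by (intro nth) arith
    show "\<exists>l<b - k. (\<forall>i<l. y ! (a + i) = y ! (k + i)) \<and> y ! (a + l) < y ! (k + l)"
      apply (rule exI[of _ l]) using l lb e1 e2 e3 by auto
  next
    assume A: "a < b \<and> (\<forall>k. a < k \<and> k < b \<longrightarrow> (\<exists>l<b - k. (\<forall>i<l. y ! (a + i) = y ! (k + i)) \<and> y ! (a + l) < y ! (k + l)))"
    show "sg y a b \<noteq> []" using A len by auto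
    fix k assume k: "0 < k \<and> k < b - a"
    have k': "a < a + k \<and> a + k < b" using k by arith
    obtain l where l: "l<b - (a+k)" "\<forall>i<l. y ! (a + i) = y ! (a+k + i)" "y ! (a + l) < y ! (a+k + l)"
      using A k' by blast
    have lb: "l < b - a - k" using l(1) by arith
    have e1: "\<And>i. i \<le> l \<Longrightarrow> sg y a b ! i = y ! (a+i)" using lb by (intro nth) arith
    have e2: "\<And>i. i \<le> l \<Longrightarrow> sg y a b ! (k + i) = y ! (a+k+i)"
    proof -
      fix i assume "i \<le> l"
      then have "k + i < b - a" using lb by arith
      then show "sg y a b ! (k + i) = y ! (a+k+i)" using nth by (simp add: add.assoc)
    qed
    show "\<exists>l<b - a - k. (\<forall>i<l. sg y a b ! i = sg y a b ! (k + i)) \<and> sg y a b ! l < sg y a b ! (k + l)"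
      apply (rule exI[of _ l]) using l lb e1 e2 by auto
  qed
qed



lemma mod_shift0: "(g - h) mod (p::nat) = 0 \<Longrightarrow> h \<le> g \<Longrightarrow> (g + l - h) mod p = l mod p"
  by (metis Nat.add_diff_assoc2 add.commute mod_add_right_eq add.right_neutral)

lemma g_boundary:
  fixes p k h :: nat
  assumes "0 < p" "h \<le> k"
  shows "(k + p - (k-h) mod p - h) mod p = 0" "k < k + p - (k-h) mod p" "h \<le> k + p - (k-h) mod p"
proof -
  define q where "q = (k-h) div p"
  define r where "r = (k-h) mod p"
  have m: "r < p" using assms by (simp add: r_def)
  have kk: "k = h + p*q + r" using mult_div_mod_eq[of p "k-h"] assms unfolding q_def r_def by linarith
  have e: "k + p - (k-h) mod p - h = p * (q + 1)"
    unfolding r_def[symmetric] using kk m by (simp add: distrib_left)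
  show "(k + p - (k-h) mod p - h) mod p = 0" unfolding e by simp
  show "k < k + p - (k-h) mod p" "h \<le> k + p - (k-h) mod p" using m kk unfolding r_def by auto
qed

lemma g_le:
  fixes p k h Q :: nat
  assumes "0 < p" "h \<le> k" "k < h + p * Q"
  shows "k + p - (k-h) mod p \<le> h + p * Q"
proof -
  define q where "q = (k-h) div p"
  define r where "r = (k-h) mod p"
  have m: "r < p" using assms by (simp add: r_def)
  have kk: "k = h + p*q + r" using mult_div_mod_eq[of p "k-h"] assms unfolding q_def r_def by linarith
  have "p * q < p * Q" using assms kk by linarith
  then have "q < Q" by simp
  then have "p * (q + 1) \<le> p * Q" by (intro mult_le_mono2) simp
  then have "p * q + p \<le> p * Q" by (simp add: distrib_left)
  then show ?thesis unfolding r_def[symmetric] using kk m by linarith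
qed

lemma notlyn:
  fixes y :: "'a::linorder list"
  assumes p: "0 < p" and lw: "lynseg y h (h+p)" and hk: "h \<le> k"
  and g: "g = k + p - (k-h) mod p"
  and blk: "\<forall>a. h \<le> a \<longrightarrow> a < g \<longrightarrow> y!a = y!(h + (a-h) mod p)"
  and gm: "g \<le> m"
  and sp: "\<forall>l. l < Suc m - g \<longrightarrow> (\<forall>i<l. y!(g+i) = y!(h + i mod p)) \<longrightarrow> y!(g+l) \<le> y!(h + l mod p)"
  shows "\<not> lynseg y k (Suc m)"
proof
  assume L: "lynseg y k (Suc m)"
  define r where "r = (k-h) mod p"
  have rp: "r < p" using p by (simp add: r_def)
  have kg: "k < g" "g = k + (p - r)" using rp g r_def by auto
  from L kg gm obtain l where l: "l < Suc m - g" "\<forall>i<l. y!(k+i) = y!(g+i)" "y!(k+l) < y!(g+l)"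
    unfolding lynseg_def by (metis le_imp_less_Suc)
  have kblk: "\<And>i. i < p - r \<Longrightarrow> y!(k+i) = y!(h + r + i)"
  proof -
    fix i assume i: "i < p - r"
    have "y!(k+i) = y!(h + (k+i-h) mod p)" using blk hk kg i by auto
    moreover have "(k+i-h) mod p = r + i"
    proof -
      have "(k+i-h) mod p = ((k-h) + i) mod p" using hk by (simp add: algebra_simps)
      also have "\<dots> = (r + i) mod p" unfolding r_def by (simp add: mod_add_left_eq)
      also have "\<dots> = r + i" using i by simp
      finally show ?thesis .
    qed
    ultimately show "y!(k+i) = y!(h + r + i)" by (simp add: add.assoc)
  qed
  show False
  proof (cases "r = 0")
    case False
    then have "h < h + r \<and> h + r < h + p" using rp by simp
    then obtain l0 where l0: "l0 < p - r" "\<forall>i<l0. y!(h+i) = y!(h+r+i)" "y!(h+l0) < y!(h+r+l0)"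
      using lw unfolding lynseg_def by (metis add_diff_cancel_left' diff_diff_left)
    have pre: "\<And>i. i < l \<Longrightarrow> i < l0 \<Longrightarrow> y!(g+i) = y!(h + i mod p)"
    proof -
      fix i assume i: "i < l" "i < l0"
      have "y!(g+i) = y!(k+i)" using l i by simp
      also have "\<dots> = y!(h+r+i)" using kblk i l0 by simp
      also have "\<dots> = y!(h+i)" using l0 i by simp
      also have "\<dots> = y!(h + i mod p)" using i l0 by simp
      finally show "y!(g+i) = y!(h + i mod p)" .
    qed
    show False
    proof (cases "l \<le> l0")
      case True
      have "y!(g+l) \<le> y!(h + l mod p)" using sp l(1) pre True by auto
      also have "\<dots> = y!(h+l)" using True l0 by simp
      also have "\<dots> \<le> y!(h+r+l)"
        using l0 True by (cases "l = l0") (auto simp: less_imp_le)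
      also have "\<dots> = y!(k+l)" using kblk True l0 by simp
      finally show False using l(3) by simp
    next
      case False
      have "y!(g+l0) \<le> y!(h + l0 mod p)" using sp l(1) pre False by auto
      also have "\<dots> = y!(h+l0)" using l0 by simp
      also have "\<dots> < y!(h+r+l0)" using l0 by simp
      also have "\<dots> = y!(k+l0)" using kblk l0 by simp
      also have "\<dots> = y!(g+l0)" using l False by simp
      finally show False by simp
    qed
  next
    case True
    have W: "\<And>i. i < l \<Longrightarrow> y!(g+i) = y!(h + i mod p)"
    proof -
      fix i show "i < l \<Longrightarrow> y!(g+i) = y!(h + i mod p)"
      proof (induction i rule: less_induct)
        case (less i)
        show ?case
        proof (cases "i < p")
          case True
          have "y!(g+i) = y!(k+i)" using l less by simp
          also have "\<dots> = y!(h + i)" using kblk True \<open>r = 0\<close> by simp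
          finally show ?thesis using True by simp
        next
          case False
          have "y!(g+i) = y!(k+i)" using l less by simp
          also have "k + i = g + (i - p)" using kg False \<open>r = 0\<close> by simp
          also have "y!(g + (i-p)) = y!(h + (i-p) mod p)" using less.IH[of "i-p"] less.prems p False by simp
          also have "(i-p) mod p = i mod p" using False by (simp add: le_mod_geq)
          finally show ?thesis .
        qed
      qed
    qed
    have "y!(g+l) \<le> y!(h + l mod p)" using sp l(1) W by auto
    moreover have "y!(k+l) = y!(h + l mod p)"
    proof (cases "l < p")
      case True
      then show ?thesis using kblk \<open>r = 0\<close> by simp
    next
      case False
      have "k + l = g + (l - p)" using kg False \<open>r = 0\<close> by simp
      then have "y!(k+l) = y!(h + (l-p) mod p)" using W[of "l-p"] p False by simp
      also have "(l-p) mod p = l mod p" using False by (simp add: le_mod_geq)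
      finally show ?thesis .
    qed
    ultimately show False using l(3) by simp
  qed
qed



lemma sp_lemma:
  fixes y :: "'a::linorder list"
  assumes p: "0<p" and hg: "h \<le> g" and gm0: "(g - h) mod p = 0" and gj: "g \<le> j"
  and blk: "\<forall>a. h \<le> a \<longrightarrow> a < j \<longrightarrow> y!a = y!(h + (a-h) mod p)"
  and iv: "i = h + (j-h) mod p"
  and c: "y!j < y!i \<or> (y!j = y!i \<and> m \<le> j)"
  shows "\<forall>l. l < Suc m - g \<longrightarrow> (\<forall>t<l. y!(g+t) = y!(h + t mod p)) \<longrightarrow> y!(g+l) \<le> y!(h + l mod p)"
proof (intro allI impI)
  fix l assume l: "l < Suc m - g" and pre: "\<forall>t<l. y!(g+t) = y!(h + t mod p)"
  have jm: "(j - g) mod p = (j-h) mod p"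
    using mod_shift0[OF gm0 hg, of "j-g"] gj by simp
  consider "g + l < j" | "g + l = j" | "j < g + l" by arith
  then show "y!(g+l) \<le> y!(h + l mod p)"
  proof cases
    case 1
    then have "y!(g+l) = y!(h + (g+l-h) mod p)" using blk hg by auto
    also have "(g+l-h) mod p = l mod p" using mod_shift0[OF gm0 hg] by simp
    finally show ?thesis by simp
  next
    case 2
    then have "l = j - g" by simp
    then have "y!(h + l mod p) = y!i" using jm iv by simp
    then show ?thesis using c 2 by auto
  next
    case 3
    then have "j - g < l" using gj by arith
    then have "y!(g + (j-g)) = y!(h + (j-g) mod p)" using pre by simp
    then have "y!j = y!i" using jm iv gj by simp
    then have "m \<le> j" using c by auto
    then show ?thesis using l 3 by simp
  qed
qed

lemma duval:
  fixes y :: "'a::linorder list"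
  assumes p: "0<p" and lw: "lynseg y h (h+p)"
  and blk: "\<forall>a. h \<le> a \<longrightarrow> a < j \<longrightarrow> y!a = y!(h + (a-h) mod p)"
  and pj: "p \<le> j - h" and iv: "i = h + (j-h) mod p" and lt: "y!i < y!j"
  shows "lynseg y h (Suc j)"
  unfolding lynseg_def
proof (intro conjI allI impI)
  show "h < Suc j" using p pj by simp
  fix k assume k: "h < k \<and> k < Suc j"
  define r where "r = (k-h) mod p"
  define q where "q = (k-h) div p"
  have rp: "r < p" using p by (simp add: r_def)
  have kk: "k = h + p*q + r" using mult_div_mod_eq[of p "k-h"] k unfolding q_def r_def by linarith
  have hj: "h + p \<le> j" using pj p by simp
  have jk: "(j - h) mod p = (r + (j - k)) mod p"
  proof -
    have "j - h = (k - h) + (j - k)" using k by simp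
    then have "(j - h) mod p = ((k-h) + (j-k)) mod p" by simp
    also have "\<dots> = (r + (j-k)) mod p" unfolding r_def by (simp add: mod_add_left_eq)
    finally show ?thesis .
  qed
  show "\<exists>l<Suc j - k. (\<forall>i<l. y ! (h + i) = y ! (k + i)) \<and> y ! (h + l) < y ! (k + l)"
  proof (cases "r = 0")
    case True
    have W: "\<And>t. t < j - k \<Longrightarrow> y!(k+t) = y!(h + t mod p)"
    proof -
      fix t assume t: "t < j - k"
      have "y!(k+t) = y!(h + (k+t-h) mod p)" using blk k t by auto
      also have "(k+t-h) mod p = t mod p"
      proof -
        have "k + t - h = (k - h) + t" using k by simp
        then show ?thesis using True unfolding r_def by (simp add: mod_add_left_eq[symmetric])
      qed
      finally show "y!(k+t) = y!(h + t mod p)" .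
    qed
    have W2: "\<And>t. t \<le> j - k \<Longrightarrow> y!(h+t) = y!(h + t mod p)"
    proof -
      fix t assume t: "t \<le> j - k"
      then have "y!(h+t) = y!(h + (h+t-h) mod p)" using blk k by auto
      then show "y!(h+t) = y!(h + t mod p)" by simp
    qed
    show ?thesis
    proof (intro exI conjI allI impI)
      show "j - k < Suc j - k" using k by arith
      fix t assume t: "t < j - k"
      have a: "y!(k+t) = y!(h + t mod p)" using W t by blast
      have b: "y!(h+t) = y!(h + t mod p)" using W2 t by simp
      show "y!(h+t) = y!(k+t)" using a b by simp
    next
      have "y!(h + (j-k)) = y!(h + (j-k) mod p)" using W2[of "j-k"] by simp
      also have "(j-k) mod p = (j-h) mod p" using jk True by simp
      also have "y!(h + (j-h) mod p) = y!i" using iv by simp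
      also have "\<dots> < y!j" using lt .
      finally have "y!(h + (j-k)) < y!j" .
      moreover have "k + (j-k) = j" using k by simp
      ultimately show "y!(h + (j-k)) < y!(k + (j-k))" by simp
    qed
  next
    case False
    then have "h < h + r \<and> h + r < h + p" using rp by simp
    then obtain l0 where l0: "l0 < p - r" "\<forall>i<l0. y!(h+i) = y!(h+r+i)" "y!(h+l0) < y!(h+r+l0)"
      using lw unfolding lynseg_def by (metis add_diff_cancel_left' diff_diff_left)
    have kblk: "\<And>t. t < p - r \<Longrightarrow> k + t < j \<Longrightarrow> y!(k+t) = y!(h + r + t)"
    proof -
      fix t assume t: "t < p - r" "k + t < j"
      have "y!(k+t) = y!(h + (k+t-h) mod p)" using blk k t by auto
      moreover have "(k+t-h) mod p = r + t"
      proof -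
        have "(k+t-h) mod p = ((k-h) + t) mod p" using k by (simp add: algebra_simps)
        also have "\<dots> = (r + t) mod p" unfolding r_def by (simp add: mod_add_left_eq)
        also have "\<dots> = r + t" using t by simp
        finally show ?thesis .
      qed
      ultimately show "y!(k+t) = y!(h + r + t)" by (simp add: add.assoc)
    qed
    show ?thesis
    proof (cases "k + l0 < j")
      case True
      show ?thesis
      proof (intro exI conjI allI impI)
        show "l0 < Suc j - k" using True by simp
        fix t assume "t < l0" then show "y!(h+t) = y!(k+t)" using l0 kblk True by simp
      next
        show "y!(h+l0) < y!(k+l0)" using l0 kblk True by simp
      qed
    next
      case False
      define l where "l = j - k"
      have ll0: "l \<le> l0" using False l_def by simp
      show ?thesis
      proof (intro exI conjI allI impI)
        show "l < Suc j - k" using k l_def by arith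
        fix t assume "t < l" then show "y!(h+t) = y!(k+t)" using l0 kblk ll0 l_def by simp
      next
        have "y!(h+l) \<le> y!(h+r+l)"
          using l0 ll0 by (cases "l = l0") (auto simp: less_imp_le)
        also have "h + r + l = i"
        proof -
          have "r + l < p" using ll0 l0 by simp
          then show ?thesis using jk iv l_def by simp
        qed
        also have "y!i < y!j" using lt .
        finally have "y!(h+l) < y!j" .
        moreover have "k + l = j" using k l_def by simp
        ultimately show "y!(h+l) < y!(k+l)" by simp
      qed
    qed
  qed
qed



definition LL :: "'a::linorder list \<Rightarrow> nat \<Rightarrow> nat" where
  "LL y k = (GREATEST l. l \<le> Suc k \<and> lynseg y (Suc k - l) (Suc k))"

definition Dh :: "'a::linorder list \<Rightarrow> nat \<Rightarrow> bool" where
  "Dh y h \<longleftrightarrow> (\<forall>k m. k < h \<longrightarrow> h \<le> m \<longrightarrow> m < length y \<longrightarrow> \<not> lynseg y k (Suc m))"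

definition linv :: "'a::linorder list \<Rightarrow> lst_state \<Rightarrow> bool" where
  "linv y s = (case s of (lyns, p, h, i, j) \<Rightarrow>
     0 < p \<and> h < j \<and> j \<le> length y \<and> p \<le> j - h \<and> i = h + (j-h) mod p \<and>
     (\<forall>a. h \<le> a \<longrightarrow> a < j \<longrightarrow> y!a = y!(h + (a-h) mod p)) \<and>
     lynseg y h (h+p) \<and> Dh y h \<and> (\<forall>k<j. lyns k = LL y k))"

lemma linv_simp: "linv y (lyns, p, h, i, j) \<longleftrightarrow>
     0 < p \<and> h < j \<and> j \<le> length y \<and> p \<le> j - h \<and> i = h + (j-h) mod p \<and>
     (\<forall>a. h \<le> a \<longrightarrow> a < j \<longrightarrow> y!a = y!(h + (a-h) mod p)) \<and>
     lynseg y h (h+p) \<and> Dh y h \<and> (\<forall>k<j. lyns k = LL y k)"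
  by (simp add: linv_def)

lemma LL_eq:
  assumes "L \<le> Suc k" "lynseg y (Suc k - L) (Suc k)"
    "\<And>l. l \<le> Suc k \<Longrightarrow> lynseg y (Suc k - l) (Suc k) \<Longrightarrow> l \<le> L"
  shows "LL y k = L"
  unfolding LL_def by (rule Greatest_equality) (use assms in auto)

lemma lynseg_single: "lynseg y a (Suc a)"
  by (auto simp: lynseg_def)

lemma lynseg_less: "lynseg y a b \<Longrightarrow> a < b"
  by (simp add: lynseg_def)

lemma case1:
  fixes y :: "'a::linorder list"
  assumes inv: "linv y (lyns, p, h, i, j)" and jn: "j < length y" and lt: "y!j < y!i"
  and h'def: "h' = j - (i-h)"
  shows "linv y (lyns(h' := 1), 1, h', h', Suc h') \<and> h + j < h' + Suc h'"
proof -
  from inv have p: "0 < p" and hj: "h < j" and pj: "p \<le> j - h" and iv: "i = h + (j-h) mod p"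
    and blk: "\<forall>a. h \<le> a \<longrightarrow> a < j \<longrightarrow> y!a = y!(h + (a-h) mod p)"
    and lw: "lynseg y h (h+p)" and D: "Dh y h" and tab: "\<forall>k<j. lyns k = LL y k"
    by (auto simp: linv_simp)
  define Q where "Q = (j-h) div p"
  have jj: "j - h = p * Q + (j-h) mod p" unfolding Q_def by simp
  have mp: "(j-h) mod p < p" using p by simp
  have hQ: "h' = h + p * Q" using h'def iv jj hj by linarith
  have Q1: "1 \<le> Q" using div_le_mono[OF pj, of p] p unfolding Q_def by simp
  have "p \<le> p * Q" using Q1 by simp
  then have hp: "h + p \<le> h'" and h'j: "h' \<le> j" and jlt: "j < h' + p" using hQ jj mp by linarith+
  have Dn: "Dh y h'"
    unfolding Dh_def
  proof (intro allI impI)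
    fix k m assume k: "k < h'" and m: "h' \<le> m" and mn: "m < length y"
    show "\<not> lynseg y k (Suc m)"
    proof (cases "k < h")
      case True
      then show ?thesis using D m mn hp unfolding Dh_def by auto
    next
      case False
      then have hk: "h \<le> k" by simp
      define g where "g = k + p - (k-h) mod p"
      have gb: "(g - h) mod p = 0" "k < g" "h \<le> g" using g_boundary[OF p hk] g_def by auto
      have gh': "g \<le> h'" using g_le[OF p hk, of Q] k hQ g_def by simp
      show ?thesis
      proof (rule notlyn[OF p lw hk g_def])
        show "\<forall>a. h \<le> a \<longrightarrow> a < g \<longrightarrow> y!a = y!(h + (a-h) mod p)" using blk gh' h'j by auto
        show "g \<le> m" using gh' m by simp
        show "\<forall>l. l < Suc m - g \<longrightarrow> (\<forall>i<l. y!(g+i) = y!(h + i mod p)) \<longrightarrow> y!(g+l) \<le> y!(h + l mod p)"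
          using sp_lemma[OF p gb(3) gb(1) _ blk iv, of m] gh' h'j lt by auto
      qed
    qed
  qed
  have h'n: "h' < length y" using h'j jn by simp
  have tab': "\<forall>k<Suc h'. (lyns(h' := 1)) k = LL y k"
  proof (intro allI impI)
    fix k assume k: "k < Suc h'"
    show "(lyns(h' := 1)) k = LL y k"
    proof (cases "k = h'")
      case True
      have "LL y h' = 1"
      proof (rule LL_eq)
        show "lynseg y (Suc h' - 1) (Suc h')" using lynseg_single by simp
        fix l assume l: "l \<le> Suc h'" "lynseg y (Suc h' - l) (Suc h')"
        show "l \<le> 1"
        proof (rule ccontr)
          assume "\<not> l \<le> 1"
          then have "Suc h' - l < h'" using l by arith
          then show False using Dn h'n l unfolding Dh_def by auto
        qed
      qed simp
      then show ?thesis using True by simp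
    next
      case False
      then show ?thesis using tab k h'j by auto
    qed
  qed
  have bl: "\<forall>a. h' \<le> a \<longrightarrow> a < Suc h' \<longrightarrow> y!a = y!(h' + (a-h') mod 1)"
  proof (intro allI impI)
    fix a assume "h' \<le> a" "a < Suc h'" then have "a = h'" by arith
    then show "y!a = y!(h' + (a-h') mod 1)" by simp
  qed
  have "linv y (lyns(h' := 1), 1, h', h', Suc h')"
    unfolding linv_simp by (intro conjI) (fact bl | fact Dn | fact tab' | simp add: h'n Suc_le_eq lynseg_single)+
  moreover have "h + j < h' + Suc h'" using hp jlt by linarith
  ultimately show ?thesis by simp
qed



lemma case2:
  fixes y :: "'a::linorder list"
  assumes inv: "linv y (lyns, p, h, i, j)" and jn: "j < length y" and gt: "y!i < y!j"
  shows "linv y (lyns(j := j - h + 1), j + 1 - h, h, h, j + 1) \<and> h + j < h + (j + 1)"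
proof -
  from inv have p: "0 < p" and hj: "h < j" and pj: "p \<le> j - h" and iv: "i = h + (j-h) mod p"
    and blk: "\<forall>a. h \<le> a \<longrightarrow> a < j \<longrightarrow> y!a = y!(h + (a-h) mod p)"
    and lw: "lynseg y h (h+p)" and D: "Dh y h" and tab: "\<forall>k<j. lyns k = LL y k"
    by (auto simp: linv_simp)
  have L: "lynseg y h (Suc j)" using duval[OF p lw blk pj iv gt] .
  have LLj: "LL y j = Suc j - h"
  proof (rule LL_eq)
    show "Suc j - h \<le> Suc j" by simp
    show "lynseg y (Suc j - (Suc j - h)) (Suc j)" using L hj by simp
    fix l assume l: "l \<le> Suc j" "lynseg y (Suc j - l) (Suc j)"
    show "l \<le> Suc j - h"
    proof (rule ccontr)
      assume "\<not> l \<le> Suc j - h"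
      then have "Suc j - l < h" using l hj by arith
      then show False using D jn hj l unfolding Dh_def by auto
    qed
  qed
  have bl: "\<forall>a. h \<le> a \<longrightarrow> a < j + 1 \<longrightarrow> y!a = y!(h + (a-h) mod (j + 1 - h))"
  proof (intro allI impI)
    fix a assume "h \<le> a" "a < j + 1"
    then have "(a - h) mod (j + 1 - h) = a - h" by simp
    then show "y!a = y!(h + (a-h) mod (j + 1 - h))" using \<open>h \<le> a\<close> by simp
  qed
  have tab': "\<forall>k<j+1. (lyns(j := j - h + 1)) k = LL y k"
    using tab LLj hj by (auto simp: less_Suc_eq)
  have L': "lynseg y h (h + (j + 1 - h))" using L hj by simp
  have "linv y (lyns(j := j - h + 1), j + 1 - h, h, h, j + 1)"
    unfolding linv_simp
    by (intro conjI) (fact bl | fact D | fact tab' | fact L' | use hj jn in simp)+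
  then show ?thesis by simp
qed

lemma lynseg_cong:
  fixes y :: "'a::linorder list"
  assumes "b \<le> length y" "d \<le> length y" "a \<le> b" "b - a = d - c"
    "\<forall>t < b - a. y!(a+t) = y!(c+t)"
  shows "lynseg y a b = lynseg y c d"
proof -
  have "sg y a b = sg y c d"
    using assms by (intro nth_equalityI) (auto simp: sg_def)
  then show ?thesis using lyndon_sg assms by metis
qed

lemma LL_ij:
  fixes y :: "'a::linorder list"
  assumes inv: "linv y (lyns, p, h, i, j)" and jn: "j < length y" and eq: "y!j = y!i"
  shows "LL y j = LL y i"
proof -
  from inv have p: "0 < p" and hj: "h < j" and pj: "p \<le> j - h" and iv: "i = h + (j-h) mod p"
    and blk: "\<forall>a. h \<le> a \<longrightarrow> a < j \<longrightarrow> y!a = y!(h + (a-h) mod p)"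
    and lw: "lynseg y h (h+p)" and D: "Dh y h"
    by (auto simp: linv_simp)
  define Q where "Q = (j-h) div p"
  have jj: "j - h = p * Q + (j-h) mod p" unfolding Q_def by simp
  have mp: "(j-h) mod p < p" using p by simp
  have Q1: "1 \<le> Q" using div_le_mono[OF pj, of p] p unfolding Q_def by simp
  have "p \<le> p * Q" using Q1 by simp
  then have ij: "i < j" and hi: "h \<le> i" and jiQ: "j - i = p * Q" using jj mp iv by linarith+
  define u where "u = Suc i - h"
  define hh where "hh = h + p * Q"
  have hhj: "hh \<le> j" "Suc j - u = hh" using jj iv hi ij unfolding hh_def u_def by linarith+
  have A: "\<And>l. l \<le> Suc j \<Longrightarrow> lynseg y (Suc j - l) (Suc j) \<Longrightarrow> l \<le> u"
  proof (rule ccontr)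
    fix l assume l: "l \<le> Suc j" "lynseg y (Suc j - l) (Suc j)" and nl: "\<not> l \<le> u"
    define k where "k = Suc j - l"
    have khh: "k < hh" using nl hhj l unfolding k_def by linarith
    show False
    proof (cases "k < h")
      case True
      then show False using D jn hj l k_def unfolding Dh_def by auto
    next
      case False
      then have hk: "h \<le> k" by simp
      define g where "g = k + p - (k-h) mod p"
      have gb: "(g - h) mod p = 0" "k < g" "h \<le> g" using g_boundary[OF p hk] g_def by auto
      have ghh: "g \<le> hh" using g_le[OF p hk, of Q] khh hh_def g_def by simp
      have "\<not> lynseg y k (Suc j)"
      proof (rule notlyn[OF p lw hk g_def])
        show "\<forall>a. h \<le> a \<longrightarrow> a < g \<longrightarrow> y!a = y!(h + (a-h) mod p)" using blk ghh hhj by auto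
        show "g \<le> j" using ghh hhj by simp
        show "\<forall>l. l < Suc j - g \<longrightarrow> (\<forall>i<l. y!(g+i) = y!(h + i mod p)) \<longrightarrow> y!(g+l) \<le> y!(h + l mod p)"
          using sp_lemma[OF p gb(3) gb(1) _ blk iv, of j] ghh hhj eq by auto
      qed
      then show False using l k_def by simp
    qed
  qed
  have B: "\<And>l. l \<le> Suc i \<Longrightarrow> lynseg y (Suc i - l) (Suc i) \<Longrightarrow> l \<le> u"
  proof (rule ccontr)
    fix l assume l: "l \<le> Suc i" "lynseg y (Suc i - l) (Suc i)" and nl: "\<not> l \<le> u"
    then have "Suc i - l < h" unfolding u_def by arith
    then show False using D jn hi ij l unfolding Dh_def by auto
  qed
  have C: "\<And>l. l \<le> u \<Longrightarrow> lynseg y (Suc j - l) (Suc j) = lynseg y (Suc i - l) (Suc i)"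
  proof -
    fix l assume lu: "l \<le> u"
    show "lynseg y (Suc j - l) (Suc j) = lynseg y (Suc i - l) (Suc i)"
    proof (rule lynseg_cong)
      show "Suc j \<le> length y" "Suc i \<le> length y" using jn ij by simp_all
      show "Suc j - l \<le> Suc j" by simp
      show "Suc j - (Suc j - l) = Suc i - (Suc i - l)" using lu u_def hi ij by arith
      show "\<forall>t<Suc j - (Suc j - l). y ! (Suc j - l + t) = y ! (Suc i - l + t)"
      proof (intro allI impI)
        fix t assume t: "t < Suc j - (Suc j - l)"
        define c where "c = Suc i - l + t"
        have cb: "h \<le> c" "c \<le> i" "Suc j - l + t = c + p * Q"
          using t lu u_def hi ij jiQ unfolding c_def by linarith+
        show "y ! (Suc j - l + t) = y ! (Suc i - l + t)"
        proof (cases "c = i")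
          case True
          then have "c + p * Q = j" using jiQ ij by simp
          then show ?thesis using cb True eq c_def by simp
        next
          case False
          have "y ! (c + p*Q) = y!(h + (c + p*Q - h) mod p)" using blk cb False jiQ ij by auto
          also have "(c + p*Q - h) mod p = (c - h) mod p"
          proof -
            have "c + p*Q - h = (c - h) + p*Q" using cb by simp
            then show ?thesis by simp
          qed
          also have "y!(h + (c-h) mod p) = y!c" using blk cb ij by auto
          finally have X: "y ! (c + p*Q) = y!c" .
          show ?thesis unfolding cb(3) c_def[symmetric] using X .
        qed
      qed
    qed
  qed
  have "\<And>l. (l \<le> Suc j \<and> lynseg y (Suc j - l) (Suc j)) = (l \<le> Suc i \<and> lynseg y (Suc i - l) (Suc i))"
  proof -
    fix l
    show "(l \<le> Suc j \<and> lynseg y (Suc j - l) (Suc j)) = (l \<le> Suc i \<and> lynseg y (Suc i - l) (Suc i))"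
    proof (cases "l \<le> u")
      case True
      moreover have "u \<le> Suc i" "Suc i \<le> Suc j" using ij unfolding u_def by simp_all
      ultimately show ?thesis using C by auto
    next
      case False
      then show ?thesis using A B by auto
    qed
  qed
  then show ?thesis unfolding LL_def by simp
qed

lemma case3:
  fixes y :: "'a::linorder list"
  assumes inv: "linv y (lyns, p, h, i, j)" and jn: "j < length y" and eq: "y!j = y!i"
  shows "linv y (lyns(j := lyns i), p, h, h + (i - h + 1) mod p, j + 1) \<and> h + j < h + (j + 1)"
proof -
  from inv have p: "0 < p" and hj: "h < j" and pj: "p \<le> j - h" and iv: "i = h + (j-h) mod p"
    and blk: "\<forall>a. h \<le> a \<longrightarrow> a < j \<longrightarrow> y!a = y!(h + (a-h) mod p)"
    and lw: "lynseg y h (h+p)" and D: "Dh y h" and tab: "\<forall>k<j. lyns k = LL y k"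
    by (auto simp: linv_simp)
  have mp: "(j-h) mod p < p" using p by simp
  have ij: "i < j" using iv mp pj by linarith
  have iv': "h + (i - h + 1) mod p = h + (j + 1 - h) mod p"
  proof -
    have "(i - h + 1) mod p = ((j-h) mod p + 1) mod p" using iv by simp
    also have "\<dots> = (j - h + 1) mod p" by (simp add: mod_Suc_eq)
    also have "j - h + 1 = j + 1 - h" using hj by simp
    finally show ?thesis by simp
  qed
  have bl: "\<forall>a. h \<le> a \<longrightarrow> a < j + 1 \<longrightarrow> y!a = y!(h + (a-h) mod p)"
  proof (intro allI impI)
    fix a assume a: "h \<le> a" "a < j + 1"
    show "y!a = y!(h + (a-h) mod p)"
    proof (cases "a = j")
      case True
      then show ?thesis using eq iv by simp
    next
      case False
      then show ?thesis using blk a by simp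
    qed
  qed
  have tab': "\<forall>k<j+1. (lyns(j := lyns i)) k = LL y k"
  proof (intro allI impI)
    fix k assume "k < j + 1"
    then consider "k < j" | "k = j" by arith
    then show "(lyns(j := lyns i)) k = LL y k"
    proof cases
      case 1 then show ?thesis using tab by simp
    next
      case 2 then show ?thesis using tab ij LL_ij[OF inv jn eq] by simp
    qed
  qed
  have pj': "p \<le> j + 1 - h" using pj hj by simp
  have jn': "j + 1 \<le> length y" using jn by simp
  have hj': "h < j + 1" using hj by simp
  have "linv y (lyns(j := lyns i), p, h, h + (i - h + 1) mod p, j + 1)"
    unfolding linv_simp
    by (intro conjI) (fact bl | fact D | fact tab' | fact lw | fact p | fact pj' | fact jn' | fact hj' | fact iv')+
  then show ?thesis by simp
qed



definition phi :: "lst_state \<Rightarrow> nat" where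
  "phi s = (case s of (lyns, p, h, i, j) \<Rightarrow> h + j)"

lemma step_inv:
  fixes y :: "'a::linorder list"
  assumes inv: "linv y s" and jn: "lst_j s < length y"
  shows "linv y (lst_step (word_lt y) s) \<and> phi s < phi (lst_step (word_lt y) s)"
proof -
  obtain lyns p h i j where s: "s = (lyns, p, h, i, j)" by (cases s) auto
  have inv': "linv y (lyns, p, h, i, j)" using inv s by simp
  have jn': "j < length y" using jn s by (simp add: lst_j_def)
  show ?thesis
  proof (cases "y!j < y!i")
    case True
    have st: "lst_step (word_lt y) s = (lyns(j - (i-h) := 1), 1, j - (i-h), j - (i-h), Suc (j - (i-h)))"
      using True s by (simp add: lst_step_def word_lt_def Let_def)
    show ?thesis using case1[OF inv' jn' True refl] st s by (simp add: phi_def)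
  next
    case False
    note F1 = False
    show ?thesis
    proof (cases "y!i < y!j")
      case True
      have st: "lst_step (word_lt y) s = (lyns(j := j - h + 1), j + 1 - h, h, h, j + 1)"
        using True F1 s by (simp add: lst_step_def word_lt_def)
      show ?thesis using case2[OF inv' jn' True] st s by (simp add: phi_def)
    next
      case False
      have eq: "y!j = y!i" using F1 False by simp
      have st: "lst_step (word_lt y) s = (lyns(j := lyns i), p, h, h + (i - h + 1) mod p, j + 1)"
        using False F1 s by (simp add: lst_step_def word_lt_def)
      show ?thesis using case3[OF inv' jn' eq] st s by (simp add: phi_def)
    qed
  qed
qed

lemma LL0: "LL y 0 = 1"
proof (rule LL_eq)
  show "lynseg y (Suc 0 - 1) (Suc 0)" using lynseg_single[of y 0] by simp
qed auto

lemma init_inv: "y \<noteq> [] \<Longrightarrow> linv y lst_init"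
  unfolding lst_init_def linv_simp
  using LL0[of y] lynseg_single[of y 0] by (auto simp: Dh_def Suc_le_eq)

lemma iter_suc: "lst_iter y (Suc k) = lst_step (word_lt y) (lst_iter y k)"
  by (simp add: lst_iter_def)

lemma iter_inv:
  fixes y :: "'a::linorder list"
  assumes "y \<noteq> []"
  shows "(\<forall>k'<k. lst_j (lst_iter y k') < length y) \<Longrightarrow> linv y (lst_iter y k) \<and> k + 1 \<le> phi (lst_iter y k)"
proof (induction k)
  case 0
  show ?case using init_inv[OF assms] by (simp add: lst_iter_def lst_init_def phi_def)
next
  case (Suc k)
  then have IH: "linv y (lst_iter y k) \<and> k + 1 \<le> phi (lst_iter y k)" by simp
  have "lst_j (lst_iter y k) < length y" using Suc.prems by simp
  then show ?case using step_inv[of y "lst_iter y k"] IH iter_suc[of y k] by simp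
qed

lemma phi_bound: "linv y s \<Longrightarrow> phi s \<le> 2 * length y"
  by (cases s) (auto simp: linv_simp phi_def)

lemma step_cong:
  fixes y z :: "'a::linorder list"
  assumes inv: "linv y s" and jn: "lst_j s < length y"
  and cmp: "\<forall>a < length y. \<forall>b < length y. (y ! a < y ! b) = (z ! a < z ! b)"
  shows "lst_step (word_lt z) s = lst_step (word_lt y) s"
proof -
  obtain lyns p h i j where s: "s = (lyns, p, h, i, j)" by (cases s) auto
  from inv s have p: "0 < p" and pj: "p \<le> j - h" and iv: "i = h + (j-h) mod p"
    by (auto simp: linv_simp)
  have jn': "j < length y" using jn s by (simp add: lst_j_def)
  have "(j-h) mod p < p" using p by simp
  then have ij: "i < j" using iv pj by linarith
  have c1: "word_lt z j i = word_lt y j i" using cmp ij jn' by (simp add: word_lt_def)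
  have c2: "word_lt z i j = word_lt y i j" using cmp ij jn' by (simp add: word_lt_def)
  show ?thesis unfolding s lst_step_def using c1 c2 by simp
qed

lemma LL_correct:
  fixes y :: "'a::linorder list"
  assumes "k < length y"
  shows "longest_lyndon_suffix_len (take (k+1) y) = LL y k"
proof -
  have len: "length (take (k+1) y) = Suc k" using assms by simp
  have "\<And>l. (l \<le> Suc k \<and> lyndon (drop (Suc k - l) (take (Suc k) y))) = (l \<le> Suc k \<and> lynseg y (Suc k - l) (Suc k))"
    using lyndon_sg[of "Suc k" y] assms by (simp add: sg_def)
  then show ?thesis unfolding longest_lyndon_suffix_len_def LL_def len by simp
qed

theorem proposition5:
  "\<exists>c::nat. \<forall>y :: 'a::linorder list. y \<noteq> [] \<longrightarrow>
     (\<exists>k. \<not> lst_j (lst_iter y k) < length y)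
   \<and> (\<forall>j < length y. lyndon_suffix_table y j = longest_lyndon_suffix_len (take (j + 1) y))
   \<and> lst_steps y \<le> c * length y
   \<and> (\<forall>z :: 'a list. length z = length y \<and>
        (\<forall>a < length y. \<forall>b < length y. (y ! a < y ! b) = (z ! a < z ! b)) \<longrightarrow>
        lst_steps z = lst_steps y \<and> lyndon_suffix_table z = lyndon_suffix_table y)"
proof (intro exI[of _ 2] allI impI)
  fix y :: "'a::linorder list"
  assume ne: "y \<noteq> []"
  define n where "n = length y"
  have ex: "\<exists>k\<le>2*n. \<not> lst_j (lst_iter y k) < n"
  proof (rule ccontr)
    assume "\<not> (\<exists>k\<le>2*n. \<not> lst_j (lst_iter y k) < n)"
    then have "\<forall>k'<2*n. lst_j (lst_iter y k') < length y" unfolding n_def by auto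
    from iter_inv[OF ne this] phi_bound[of y "lst_iter y (2*n)"] show False unfolding n_def by simp
  qed
  then have ex1: "\<exists>k. \<not> lst_j (lst_iter y k) < length y" unfolding n_def by blast
  define K where "K = lst_steps y"
  have KP: "\<not> lst_j (lst_iter y K) < length y"
    unfolding K_def lst_steps_def by (rule LeastI_ex[OF ex1])
  have Kle: "K \<le> 2 * length y"
  proof -
    obtain k where k: "k \<le> 2*n" "\<not> lst_j (lst_iter y k) < n" using ex by blast
    have "K \<le> k" unfolding K_def lst_steps_def using k n_def by (intro Least_le) simp
    then show ?thesis using k n_def by simp
  qed
  have before: "\<forall>k'<K. lst_j (lst_iter y k') < length y"
    unfolding K_def lst_steps_def using not_less_Least by blast
  have invK: "linv y (lst_iter y K)" using iter_inv[OF ne before] by simp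
  obtain lyns p h i j where sK: "lst_iter y K = (lyns, p, h, i, j)" by (cases "lst_iter y K") auto
  have jeq: "j = length y" using invK KP sK by (auto simp: linv_simp lst_j_def)
  have tabK: "\<forall>k<length y. lyns k = LL y k" using invK sK jeq by (simp add: linv_simp)
  have table: "\<forall>k<length y. lyndon_suffix_table y k = longest_lyndon_suffix_len (take (k + 1) y)"
    using tabK LL_correct[of _ y] sK unfolding lyndon_suffix_table_def K_def[symmetric]
    by (simp add: lst_lyns_def)
  have Kle': "lst_steps y \<le> 2 * length y" using Kle unfolding K_def .
  have zpart: "\<forall>z :: 'a list. length z = length y \<and>
        (\<forall>a < length y. \<forall>b < length y. (y ! a < y ! b) = (z ! a < z ! b)) \<longrightarrow>
        lst_steps z = lst_steps y \<and> lyndon_suffix_table z = lyndon_suffix_table y"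
  proof (intro allI impI)
    fix z :: "'a list"
    assume A: "length z = length y \<and> (\<forall>a < length y. \<forall>b < length y. (y ! a < y ! b) = (z ! a < z ! b))"
    have same: "\<And>k. k \<le> K \<Longrightarrow> lst_iter z k = lst_iter y k"
    proof -
      fix k show "k \<le> K \<Longrightarrow> lst_iter z k = lst_iter y k"
      proof (induction k)
        case 0 then show ?case by (simp add: lst_iter_def)
      next
        case (Suc k)
        then have kK: "k < K" by simp
        have pre: "\<forall>k'<k. lst_j (lst_iter y k') < length y" using before kK by simp
        have inv: "linv y (lst_iter y k)" using iter_inv[OF ne pre] by simp
        have jk: "lst_j (lst_iter y k) < length y" using before kK by simp
        have "lst_iter z (Suc k) = lst_step (word_lt z) (lst_iter y k)"
          using Suc iter_suc[of z k] by simp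
        also have "\<dots> = lst_step (word_lt y) (lst_iter y k)"
          using step_cong[OF inv jk] A by blast
        finally show ?case using iter_suc[of y k] by simp
      qed
    qed
    have stz: "lst_steps z = K"
      unfolding lst_steps_def
    proof (rule Least_equality)
      show "\<not> lst_j (lst_iter z K) < length z" using same[of K] KP A by simp
      fix k assume k: "\<not> lst_j (lst_iter z k) < length z"
      show "K \<le> k"
      proof (rule ccontr)
        assume "\<not> K \<le> k"
        then have "k < K" by simp
        then show False using same[of k] before k A by simp
      qed
    qed
    show "lst_steps z = lst_steps y \<and> lyndon_suffix_table z = lyndon_suffix_table y"
      using stz same[of K] unfolding lyndon_suffix_table_def K_def by simp
  qed
  show "(\<exists>k. \<not> lst_j (lst_iter y k) < length y)
   \<and> (\<forall>j < length y. lyndon_suffix_table y j = longest_lyndon_suffix_len (take (j + 1) y))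
   \<and> lst_steps y \<le> 2 * length y
   \<and> (\<forall>z :: 'a list. length z = length y \<and>
        (\<forall>a < length y. \<forall>b < length y. (y ! a < y ! b) = (z ! a < z ! b)) \<longrightarrow>
        lst_steps z = lst_steps y \<and> lyndon_suffix_table z = lyndon_suffix_table y)"
    by (intro conjI) (fact ex1 | fact table | fact Kle' | fact zpart)+
qed


end
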